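(* Let $U$ be the transition matrix of a quantum random walk (QRW) on $\mathcal I=\mathbb Z$ or on $\mathcal I=\mathbb Z_{\ge 0}$ with arbitrary non trivial (not necessarily equal) coins, and let $\mu_n$ ($n\ge 0$) denote the $n$-th moment of the orthogonality measure associated with the walk (scalar if $\mathcal I=\mathbb Z_{\ge0}$, $2\times2$ matrix valued if $\mathcal I=\mathbb Z$). Then, as $n\to\infty$: (1) $U^n$ converges weakly to zero if and only if $\mu_n\to 0$. (2) For any sequence $(e^{i\theta_n})_{n\ge0}$ of phases ($\theta_n\in\mathbb R$), $e^{-i\theta_n}U^n$ has a non null weak limit if and only if $e^{-i\theta_n}\mu_n$ converges to a non null limit and $\lim_{n\to\infty}e^{i(\theta_{n+1}-\theta_n)}$ exists.
   Context: Coins: for each site $i\in\mathcal I$, $C_i=\begin{pmatrix}c^i_{11}&c^i_{12}\\ c^i_{21}&c^i_{22}\end{pmatrix}$ is a $2\times2$ unitary matrix; it is called non trivial if $c^i_{11}\neq0$ (equivalently $c^i_{22}\ne0$). All coins are assumed non trivial. The Hilbert space is $\ell^2$ over the pure states $|i\rangle\otimes|s\rangle$, $i\in\mathcal I$, $s\in\{\uparrow,\downarrow\}$; a matrix $U=(U_{j,k})$ indexed by pure states has $U_{j,k}$ = amplitude of the one-step transition from $j$ to $k$, states evolve as row vectors $\psi_n=\psi_0U^n$. Case $\mathcal I=\mathbb Z_{\ge0}$: number the pure states $|0\uparrow\rangle,|0\downarrow\rangle,|1\uparrow\rangle,|1\downarrow\rangle,\dots$ as $0,1,2,3,\dots$ (so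 $|i\uparrow\rangle=2i$, $|i\downarrow\rangle=2i+1$). The unitary transition matrix $U$ has as only non-zero entries: $U_{2i,2i+2}=c^i_{11}$, $U_{2i+1,2i+2}=c^i_{12}$ for $i\ge0$; $U_{2i,2i-1}=c^i_{21}$, $U_{2i+1,2i-1}=c^i_{22}$ for $i\ge1$; and $U_{0,0}=c^0_{21}$, $U_{1,0}=c^0_{22}$. The associated orthogonality measure $\mu$ is the unique probability measure on the unit circle $\mathbb T$ with $\int_{\mathbb T}z^n\,d\mu(z)=(U^n)_{0,0}$ for all $n\in\mathbb Z$; its moments are $\mu_n=\int_{\mathbb T}z^n d\mu$. Case $\mathcal I=\mathbb Z$: the unitary transition matrix is given by $|i\uparrow\rangle\mapsto c^i_{11}|i+1\uparrow\rangle+c^i_{21}|i-1\downarrow\rangle$, $|i\downarrow\rangle\mapsto c^i_{12}|i+1\uparrow\rangle+c^i_{22}|i-1\downarrow\rangle$ (i.e. $U_{i\uparrow,(i+1)\uparrow}=c^i_{11}$, $U_{i\uparrow,(i-1)\downarrow}=c^i_{21}$, $U_{i\downarrow,(i+1)\uparrow}=c^i_{12}$, $U_{i\downarrow,(i-1)\downarrow}=c^i_{22}$, all other entries $0$). Reorder ("fold") the pure states as $0,1,2,\dots$ via $4m\mapsto|m\uparrow\rangle$, $4m+1\mapsto|-(m+1)\downarrow\rangle$, $4m+2\mapsto|-(m+1)\uparrow\rangle$, $4m+3\mapsto|m\downarrow\rangle$ ($m\ge0$), and let $\mathbf U$ be $U$ in this order, viewed as a matrix of $2\times2$ blocks $(\mathbf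 U)_{j,k}$ (rows $2j,2j+1$, columns $2k,2k+1$). The associated orthogonality measure $\boldsymbol\mu$ is the unique $2\times2$ positive semidefinite matrix valued measure on $\mathbb T$ with $\int_{\mathbb T}z^n d\boldsymbol\mu(z)=(\mathbf U^n)_{0,0}$ for all $n\in\mathbb Z$; its moments are $\boldsymbol\mu_n=\int_{\mathbb T}z^nd\boldsymbol\mu$. Weak convergence: a sequence of (uniformly bounded) matrices $A_n$ converges weakly to $A$ if $(A_n)_{j,k}\to A_{j,k}$ for all indices $j,k$. *)

theory Defs
  imports "HOL-Analysis.Analysis"
begin

text \<open>A coin is a 2x2 complex matrix; entry c_{rs} is C\$r\$s with r,s in {1,2}
  (elements of the numeral type 2).\<close>

definition unitary2 :: "complex^2^2 \<Rightarrow> bool" where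
  "unitary2 C \<longleftrightarrow> C ** (\<chi> i j. cnj (C $ j $ i)) = mat 1"

definition nontrivial_coin :: "complex^2^2 \<Rightarrow> bool" where
  "nontrivial_coin C \<longleftrightarrow> C $ 1 $ 1 \<noteq> 0"

text \<open>Matrices indexed by pure states; U j k = amplitude of transition j to k.  All matrices
  used here are row-finite, so the sums are finite sums.\<close>

fun mpow :: "('a \<Rightarrow> 'a \<Rightarrow> complex) \<Rightarrow> nat \<Rightarrow> 'a \<Rightarrow> 'a \<Rightarrow> complex" where
  "mpow U 0 j k = (if j = k then 1 else 0)"
| "mpow U (Suc n) j k = (\<Sum>\<^sub>\<infinity> l. mpow U n j l * U l k)"

definition weak_conv :: "(nat \<Rightarrow> 'a \<Rightarrow> 'a \<Rightarrow> complex) \<Rightarrow> ('a \<Rightarrow> 'a \<Rightarrow> complex) \<Rightarrow> bool" where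
  "weak_conv A L \<longleftrightarrow> (\<forall>j k. (\<lambda>n. A n j k) \<longlonglongrightarrow> L j k)"

text \<open>State 2i = |i up>, 2i+1 = |i down>. spin index s = 1 for up, 2 for down.\<close>

definition spin_half :: "nat \<Rightarrow> 2" where
  "spin_half j = (if even j then 1 else 2)"

definition U_half :: "(nat \<Rightarrow> complex^2^2) \<Rightarrow> nat \<Rightarrow> nat \<Rightarrow> complex" where
  "U_half c j k =
    (let i = j div 2; s = spin_half j in
      if k = 2*i + 2 then c i $ 1 $ s
      else if i \<ge> 1 \<and> k = 2*i - 1 then c i $ 2 $ s
      else if i = 0 \<and> k = 0 then c 0 $ 2 $ s
      else 0)"

text \<open>Moments of the orthogonality measure: mu_n = (U^n)_{0,0}.\<close>
definition mom_half :: "(nat \<Rightarrow> complex^2^2) \<Rightarrow> nat \<Rightarrow> complex" where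
  "mom_half c n = mpow (U_half c) n 0 0"

text \<open>Pure states (i, b): b = True means up, b = False means down.\<close>

definition spin_idx :: "bool \<Rightarrow> 2" where
  "spin_idx b = (if b then 1 else 2)"

definition U_Z :: "(int \<Rightarrow> complex^2^2) \<Rightarrow> int \<times> bool \<Rightarrow> int \<times> bool \<Rightarrow> complex" where
  "U_Z c x y =
    (let i = fst x; s = spin_idx (snd x) in
      if fst y = i + 1 \<and> snd y then c i $ 1 $ s
      else if fst y = i - 1 \<and> \<not> snd y then c i $ 2 $ s
      else 0)"

definition fold_state :: "nat \<Rightarrow> int \<times> bool" where
  "fold_state p =
    (let m = int (p div 4) in
      if p mod 4 = 0 then (m, True)
      else if p mod 4 = 1 then (-(m+1), False)
      else if p mod 4 = 2 then (-(m+1), True)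
      else (m, False))"

definition U_fold :: "(int \<Rightarrow> complex^2^2) \<Rightarrow> nat \<Rightarrow> nat \<Rightarrow> complex" where
  "U_fold c p q = U_Z c (fold_state p) (fold_state q)"

definition idx2 :: "2 \<Rightarrow> nat" where
  "idx2 a = (if a = 1 then 0 else 1)"

definition block :: "(nat \<Rightarrow> nat \<Rightarrow> complex) \<Rightarrow> nat \<Rightarrow> nat \<Rightarrow> complex^2^2" where
  "block M j k = (\<chi> a b. M (2*j + idx2 a) (2*k + idx2 b))"

definition mom_Z :: "(int \<Rightarrow> complex^2^2) \<Rightarrow> nat \<Rightarrow> complex^2^2" where
  "mom_Z c n = block (mpow (U_fold c) n) 0 0"

definition cscale :: "complex \<Rightarrow> complex^2^2 \<Rightarrow> complex^2^2" where
  "cscale z M = (\<chi> a b. z * M $ a $ b)"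

end

theory Submission
  imports Defs
begin


inductive gen :: "(nat \<Rightarrow> complex) set \<Rightarrow> (nat \<Rightarrow> complex) \<Rightarrow> bool" for M where
  base: "f \<in> M \<Longrightarrow> gen M f"
| lin: "gen M f \<Longrightarrow> gen M g \<Longrightarrow> gen M (\<lambda>n. a * f n + b * g n)"
| sl: "gen M f \<Longrightarrow> gen M (\<lambda>n. f (Suc n))"
| sr: "gen M (\<lambda>n. f (Suc n)) \<Longrightarrow> gen M f"

lemma gen_trans: "gen M' f \<Longrightarrow> (\<And>g. g \<in> M' \<Longrightarrow> gen M g) \<Longrightarrow> gen M f"
  by (induction rule: gen.induct) (auto intro: gen.intros)

lemma gen_step:
  assumes "gen M f" "gen M g" "\<And>n. h (Suc n) = a * f n + b * g n"
  shows "gen M h"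
proof -
  have "gen M (\<lambda>n. a * f n + b * g n)" using assms(1,2) by (rule gen.lin)
  also have "(\<lambda>n. a * f n + b * g n) = (\<lambda>n. h (Suc n))" using assms(3) by simp
  finally show ?thesis by (rule gen.sr)
qed

lemma gen_solve:
  assumes "gen M f" "gen M g" "c \<noteq> 0" "\<And>n. f (Suc n) = c * h n + a * g n"
  shows "gen M h"
proof -
  have "gen M (\<lambda>n. (1/c) * f (Suc n) + (-a/c) * g n)"
    using assms by (intro gen.lin gen.sl)
  also have "(\<lambda>n. (1/c) * f (Suc n) + (-a/c) * g n) = h"
  proof
    fix n show "(1/c) * f (Suc n) + (-a/c) * g n = h n"
      unfolding assms(4) using assms(3) by (simp add: field_simps)
  qed
  finally show ?thesis .
qed

lemma gen_lim0: "gen M f \<Longrightarrow> (\<And>g. g \<in> M \<Longrightarrow> g \<longlonglongrightarrow> 0) \<Longrightarrow> f \<longlonglongrightarrow> 0"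
proof (induction rule: gen.induct)
  case (lin f g a b)
  then show ?case using tendsto_add[OF tendsto_mult_right_zero tendsto_mult_right_zero] by fastforce
next
  case (sl f) then show ?case by (simp add: LIMSEQ_Suc)
next
  case (sr f) then show ?case by (simp add: LIMSEQ_imp_Suc)
qed auto

lemma gen_conv:
  fixes \<omega> :: "nat \<Rightarrow> complex"
  assumes "gen M f" and nw: "\<And>n. norm (\<omega> n) = 1"
    and r: "convergent (\<lambda>n. \<omega> n / \<omega> (Suc n))"
    and "\<And>g. g \<in> M \<Longrightarrow> convergent (\<lambda>n. \<omega> n * g n)"
  shows "convergent (\<lambda>n. \<omega> n * f n)"
  using assms(1,4)
proof (induction rule: gen.induct)
  case (base f) then show ?case by auto
next
  case (lin f g a b)
  then obtain x y where "(\<lambda>n. \<omega> n * f n) \<longlonglongrightarrow> x" "(\<lambda>n. \<omega> n * g n) \<longlonglongrightarrow> y"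
    by (auto simp: convergent_def)
  then have "(\<lambda>n. a * (\<omega> n * f n) + b * (\<omega> n * g n)) \<longlonglongrightarrow> a * x + b * y"
    by (intro tendsto_intros)
  then show ?case by (auto simp: convergent_def algebra_simps)
next
  case (sl f)
  then obtain x where x: "(\<lambda>n. \<omega> n * f n) \<longlonglongrightarrow> x" by (auto simp: convergent_def)
  from r obtain \<rho> where \<rho>: "(\<lambda>n. \<omega> n / \<omega> (Suc n)) \<longlonglongrightarrow> \<rho>" by (auto simp: convergent_def)
  have "(\<lambda>n. \<omega> n / \<omega> (Suc n) * (\<omega> (Suc n) * f (Suc n))) \<longlonglongrightarrow> \<rho> * x"
    by (intro tendsto_intros \<rho> LIMSEQ_Suc[OF x])
  moreover have "\<omega> n / \<omega> (Suc n) * (\<omega> (Suc n) * f (Suc n)) = \<omega> n * f (Suc n)" for n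
  proof -
    have "\<omega> (Suc n) \<noteq> 0" using nw[of "Suc n"] by auto
    then show ?thesis by (simp add: field_simps)
  qed
  ultimately show ?case by (auto simp: convergent_def)
next
  case (sr f)
  then obtain x where x: "(\<lambda>n. \<omega> n * f (Suc n)) \<longlonglongrightarrow> x" by (auto simp: convergent_def)
  from r obtain \<rho> where \<rho>: "(\<lambda>n. \<omega> n / \<omega> (Suc n)) \<longlonglongrightarrow> \<rho>" by (auto simp: convergent_def)
  have l1: "(\<lambda>n. norm (\<omega> n / \<omega> (Suc n))) \<longlonglongrightarrow> norm \<rho>" by (intro tendsto_intros \<rho>)
  have "(\<lambda>n. norm (\<omega> n / \<omega> (Suc n))) = (\<lambda>n. 1)" using nw by (simp add: norm_divide)
  with l1 have "norm \<rho> = 1" using LIMSEQ_unique[OF _ tendsto_const] by metis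
  then have "\<rho> \<noteq> 0" by auto
  have "(\<lambda>n. inverse (\<omega> n / \<omega> (Suc n)) * (\<omega> n * f (Suc n))) \<longlonglongrightarrow> inverse \<rho> * x"
    by (intro tendsto_intros \<rho> x \<open>\<rho> \<noteq> 0\<close>)
  moreover have "inverse (\<omega> n / \<omega> (Suc n)) * (\<omega> n * f (Suc n)) = \<omega> (Suc n) * f (Suc n)" for n
  proof -
    have "\<omega> n \<noteq> 0" using nw[of n] by auto
    then show ?thesis by (simp add: field_simps)
  qed
  ultimately have "convergent (\<lambda>n. \<omega> (Suc n) * f (Suc n))" by (auto simp: convergent_def)
  then show ?case by (rule convergent_Suc_iff[THEN iffD1])
qed


lemma infsum_fin:
  fixes f :: "'a \<Rightarrow> complex"
  assumes "finite S" "\<And>x. x \<notin> S \<Longrightarrow> f x = 0"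
  shows "(\<Sum>\<^sub>\<infinity>x. f x) = sum f S"
proof -
  have "infsum f UNIV = infsum f S"
    by (rule infsum_cong_neutral) (use assms in auto)
  then show ?thesis using assms by simp
qed

lemma infsum_two:
  fixes f :: "'a \<Rightarrow> complex"
  assumes "a \<noteq> b" "\<And>x. x \<noteq> a \<Longrightarrow> x \<noteq> b \<Longrightarrow> f x = 0"
  shows "(\<Sum>\<^sub>\<infinity>x. f x) = f a + f b"
  using infsum_fin[of "{a,b}" f] assms by auto

lemma infsum_one:
  fixes f :: "'a \<Rightarrow> complex"
  assumes "\<And>x. x \<noteq> a \<Longrightarrow> f x = 0"
  shows "(\<Sum>\<^sub>\<infinity>x. f x) = f a"
  using infsum_fin[of "{a}" f] assms by auto

lemma mpow_rowfin:
  assumes rf: "\<And>j. finite {l. U j l \<noteq> 0}"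
  shows "finite {l. mpow U n j l \<noteq> 0}"
proof (induction n arbitrary: j)
  case 0 then show ?case by simp
next
  case (Suc n)
  have "{l. mpow U (Suc n) j l \<noteq> 0} \<subseteq> (\<Union>m\<in>{m. mpow U n j m \<noteq> 0}. {l. U m l \<noteq> 0})"
  proof
    fix l assume "l \<in> {l. mpow U (Suc n) j l \<noteq> 0}"
    then have "(\<Sum>\<^sub>\<infinity>m. mpow U n j m * U m l) \<noteq> 0" by simp
    then obtain m where "mpow U n j m * U m l \<noteq> 0" using infsum_0[of UNIV "\<lambda>m. mpow U n j m * U m l"] by blast
    then show "l \<in> (\<Union>m\<in>{m. mpow U n j m \<noteq> 0}. {l. U m l \<noteq> 0})" by auto
  qed
  moreover have "finite (\<Union>m\<in>{m. mpow U n j m \<noteq> 0}. {l. U m l \<noteq> 0})"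
    using Suc rf by auto
  ultimately show ?case by (rule finite_subset)
qed

lemma mpow_left:
  assumes rf: "\<And>j. finite {l. U j l \<noteq> 0}"
  shows "mpow U (Suc n) j k = (\<Sum>\<^sub>\<infinity>l. U j l * mpow U n l k)"
proof (induction n arbitrary: j k)
  case 0
  have "(\<Sum>\<^sub>\<infinity>l. mpow U 0 j l * U l k) = mpow U 0 j j * U j k"
    by (rule infsum_one) simp
  moreover have "(\<Sum>\<^sub>\<infinity>l. U j l * mpow U 0 l k) = U j k * mpow U 0 k k"
    by (rule infsum_one) simp
  ultimately show ?case by simp
next
  case (Suc n)
  define A where "A = {l. U j l \<noteq> 0}"
  define B where "B = (\<Union>l\<in>A. {m. mpow U n l m \<noteq> 0})"
  have fA: "finite A" using rf A_def by simp
  have fB: "finite B" unfolding B_def using fA mpow_rowfin[OF rf] by auto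
  have e1: "mpow U (Suc n) j m = (\<Sum>l\<in>A. U j l * mpow U n l m)" for m
    unfolding Suc.IH by (rule infsum_fin) (use fA A_def in auto)
  have e2: "mpow U (Suc n) j m = 0" if "m \<notin> B" for m
    unfolding e1 using that by (auto simp: B_def intro!: sum.neutral)
  have e3: "mpow U (Suc n) l k = (\<Sum>m\<in>B. mpow U n l m * U m k)" if "l \<in> A" for l
    unfolding mpow.simps by (rule infsum_fin) (use fB that in \<open>auto simp: B_def\<close>)
  have "mpow U (Suc (Suc n)) j k = (\<Sum>m\<in>B. mpow U (Suc n) j m * U m k)"
    unfolding mpow.simps(2)[of U "Suc n"] by (rule infsum_fin) (use fB e2 in auto)
  also have "\<dots> = (\<Sum>m\<in>B. \<Sum>l\<in>A. U j l * mpow U n l m * U m k)"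
    by (simp only: e1 sum_distrib_right)
  also have "\<dots> = (\<Sum>l\<in>A. \<Sum>m\<in>B. U j l * mpow U n l m * U m k)"
    by (rule sum.swap)
  also have "\<dots> = (\<Sum>l\<in>A. U j l * mpow U (Suc n) l k)"
  proof (rule sum.cong)
    fix l assume "l \<in> A"
    then show "(\<Sum>m\<in>B. U j l * mpow U n l m * U m k) = U j l * mpow U (Suc n) l k"
      by (simp only: e3 sum_distrib_left mult.assoc)
  qed simp
  also have "\<dots> = (\<Sum>\<^sub>\<infinity>l. U j l * mpow U (Suc n) l k)"
    by (rule infsum_fin[symmetric]) (use fA A_def in auto)
  finally show ?case .
qed


lemma abs_part1:
  assumes G: "\<And>j k. gen M (\<lambda>n. mpow U n j k)"
    and ME: "\<And>g. g \<in> M \<Longrightarrow> \<exists>j k. g = (\<lambda>n. mpow U n j k)"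
  shows "weak_conv (\<lambda>n. mpow U n) (\<lambda>_ _. 0) \<longleftrightarrow> (\<forall>g\<in>M. g \<longlonglongrightarrow> 0)"
proof
  assume "weak_conv (\<lambda>n. mpow U n) (\<lambda>_ _. 0)"
  then show "\<forall>g\<in>M. g \<longlonglongrightarrow> 0" using ME unfolding weak_conv_def by fastforce
next
  assume "\<forall>g\<in>M. g \<longlonglongrightarrow> 0"
  then show "weak_conv (\<lambda>n. mpow U n) (\<lambda>_ _. 0)" unfolding weak_conv_def
    by (auto intro: gen_lim0[OF G])
qed

lemma omega_zero:
  fixes \<omega> :: "nat \<Rightarrow> complex"
  assumes nw: "\<And>n. norm (\<omega> n) = 1"
  shows "(\<lambda>n. \<omega> n * g n) \<longlonglongrightarrow> 0 \<longleftrightarrow> g \<longlonglongrightarrow> 0"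
proof -
  have "(\<lambda>n. norm (\<omega> n * g n)) = (\<lambda>n. norm (g n))" using nw by (simp add: norm_mult)
  then show ?thesis
    by (metis tendsto_norm_zero_iff)
qed

lemma abs_part2:
  fixes \<omega> :: "nat \<Rightarrow> complex"
  assumes G: "\<And>j k. gen M (\<lambda>n. mpow U n j k)"
    and ME: "\<And>g. g \<in> M \<Longrightarrow> \<exists>j k. g = (\<lambda>n. mpow U n j k)"
    and cf: "\<And>k. finite {l. U l k \<noteq> 0}"
    and nw: "\<And>n. norm (\<omega> n) = 1"
  shows "(\<exists>L. L \<noteq> (\<lambda>_ _. 0) \<and> weak_conv (\<lambda>n j k. \<omega> n * mpow U n j k) L) \<longleftrightarrow>
    ((\<exists>g\<in>M. \<exists>l. l \<noteq> 0 \<and> (\<lambda>n. \<omega> n * g n) \<longlonglongrightarrow> l) \<and> (\<forall>g\<in>M. convergent (\<lambda>n. \<omega> n * g n))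
      \<and> convergent (\<lambda>n. \<omega> n / \<omega> (Suc n)))"
proof
  assume "\<exists>L. L \<noteq> (\<lambda>_ _. 0) \<and> weak_conv (\<lambda>n j k. \<omega> n * mpow U n j k) L"
  then obtain L where L0: "L \<noteq> (\<lambda>_ _. 0)" and wc0: "weak_conv (\<lambda>n j k. \<omega> n * mpow U n j k) L"
    by blast
  have wc: "(\<lambda>n. \<omega> n * mpow U n j k) \<longlonglongrightarrow> L j k" for j k
    using wc0 unfolding weak_conv_def by simp
  have "\<exists>j k. L j k \<noteq> 0"
  proof (rule ccontr)
    assume "\<not> ?thesis"
    then have "L = (\<lambda>_ _. 0)" by (intro ext) simp
    with L0 show False by simp
  qed
  then obtain j0 k0 where Ljk: "L j0 k0 \<noteq> 0" by blast
  have conv: "\<forall>g\<in>M. convergent (\<lambda>n. \<omega> n * g n)"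
    using ME wc unfolding convergent_def by fastforce
  have ex: "\<exists>g\<in>M. \<exists>l. l \<noteq> 0 \<and> (\<lambda>n. \<omega> n * g n) \<longlonglongrightarrow> l"
  proof (rule ccontr)
    assume "\<not> ?thesis"
    then have "\<forall>g\<in>M. (\<lambda>n. \<omega> n * g n) \<longlonglongrightarrow> 0" using conv unfolding convergent_def by metis
    then have "\<forall>g\<in>M. g \<longlonglongrightarrow> 0"
      by (simp add: omega_zero[OF nw])
    then have "(\<lambda>n. mpow U n j0 k0) \<longlonglongrightarrow> 0" by (intro gen_lim0[OF G]) auto
    then have "(\<lambda>n. \<omega> n * mpow U n j0 k0) \<longlonglongrightarrow> 0"
      by (simp add: omega_zero[OF nw])
    then show False using LIMSEQ_unique[OF wc[of j0 k0]] Ljk by simp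
  qed
  define S where "S = {l. U l k0 \<noteq> 0}"
  have fS: "finite S" using cf S_def by simp
  have xe: "\<omega> n * mpow U (Suc n) j0 k0 = (\<Sum>l\<in>S. (\<omega> n * mpow U n j0 l) * U l k0)" for n
  proof -
    have "mpow U (Suc n) j0 k0 = (\<Sum>l\<in>S. mpow U n j0 l * U l k0)"
      unfolding mpow.simps by (rule infsum_fin) (use fS S_def in auto)
    then show ?thesis by (simp add: sum_distrib_left mult.assoc)
  qed
  have x: "(\<lambda>n. \<omega> n * mpow U (Suc n) j0 k0) \<longlonglongrightarrow> (\<Sum>l\<in>S. L j0 l * U l k0)"
    unfolding xe by (intro tendsto_intros wc)
  have y: "(\<lambda>n. \<omega> (Suc n) * mpow U (Suc n) j0 k0) \<longlonglongrightarrow> L j0 k0"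
    using LIMSEQ_Suc[OF wc[of j0 k0]] by simp
  have q: "(\<lambda>n. (\<omega> n * mpow U (Suc n) j0 k0) / (\<omega> (Suc n) * mpow U (Suc n) j0 k0))
      \<longlonglongrightarrow> (\<Sum>l\<in>S. L j0 l * U l k0) / L j0 k0"
    by (rule tendsto_divide[OF x y Ljk])
  have ev: "eventually (\<lambda>n. \<omega> (Suc n) * mpow U (Suc n) j0 k0 \<noteq> 0) sequentially"
    using tendsto_imp_eventually_ne[OF y Ljk] .
  have "eventually (\<lambda>n. (\<omega> n * mpow U (Suc n) j0 k0) / (\<omega> (Suc n) * mpow U (Suc n) j0 k0)
      = \<omega> n / \<omega> (Suc n)) sequentially"
    using ev by eventually_elim auto
  then have "(\<lambda>n. \<omega> n / \<omega> (Suc n)) \<longlonglongrightarrow> (\<Sum>l\<in>S. L j0 l * U l k0) / L j0 k0"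
    by (rule Lim_transform_eventually[OF q])
  then show "(\<exists>g\<in>M. \<exists>l. l \<noteq> 0 \<and> (\<lambda>n. \<omega> n * g n) \<longlonglongrightarrow> l) \<and> (\<forall>g\<in>M. convergent (\<lambda>n. \<omega> n * g n))
      \<and> convergent (\<lambda>n. \<omega> n / \<omega> (Suc n))" using ex conv unfolding convergent_def by blast
next
  assume A: "(\<exists>g\<in>M. \<exists>l. l \<noteq> 0 \<and> (\<lambda>n. \<omega> n * g n) \<longlonglongrightarrow> l) \<and> (\<forall>g\<in>M. convergent (\<lambda>n. \<omega> n * g n))
      \<and> convergent (\<lambda>n. \<omega> n / \<omega> (Suc n))"
  have cv: "convergent (\<lambda>n. \<omega> n * mpow U n j k)" for j k
    by (rule gen_conv[OF G nw]) (use A in auto)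
  define L where "L j k = lim (\<lambda>n. \<omega> n * mpow U n j k)" for j k
  have wc: "weak_conv (\<lambda>n j k. \<omega> n * mpow U n j k) L"
    unfolding weak_conv_def L_def using cv by (simp add: convergent_LIMSEQ_iff)
  from A obtain g l where "g \<in> M" "l \<noteq> 0" and gl: "(\<lambda>n. \<omega> n * g n) \<longlonglongrightarrow> l" by blast
  then obtain j k where gjk: "g = (\<lambda>n. mpow U n j k)" using ME by blast
  have "L j k = l" unfolding L_def using gl gjk limI by blast
  then have "L \<noteq> (\<lambda>_ _. 0)" using \<open>l \<noteq> 0\<close> by (auto dest: fun_cong)
  then show "\<exists>L. L \<noteq> (\<lambda>_ _. 0) \<and> weak_conv (\<lambda>n j k. \<omega> n * mpow U n j k) L" using wc by blast
qed

lemma ratio_exp: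
  "exp (- \<i> * of_real (\<theta> n)) / exp (- \<i> * of_real (\<theta> (Suc n))) = exp (\<i> * of_real (\<theta> (Suc n) - \<theta> n))"
  by (simp add: exp_diff[symmetric] algebra_simps)

lemma norm_exp_i: "norm (exp (- \<i> * of_real (t::real))) = 1"
  by (simp add: norm_exp)


lemma Uh_even: "U_half c (2*i) k =
  (if k = 2*i+2 then c i $ 1 $ 1 else if i \<ge> 1 \<and> k = 2*i-1 then c i $ 2 $ 1
   else if i = 0 \<and> k = 0 then c 0 $ 2 $ 1 else 0)"
  by (simp add: U_half_def spin_half_def Let_def)

lemma Uh_odd: "U_half c (2*i+1) k =
  (if k = 2*i+2 then c i $ 1 $ 2 else if i \<ge> 1 \<and> k = 2*i-1 then c i $ 2 $ 2
   else if i = 0 \<and> k = 0 then c 0 $ 2 $ 2 else 0)"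
  by (simp add: U_half_def spin_half_def Let_def)

lemma Uh_rowfin: "finite {l. U_half c j l \<noteq> 0}"
proof -
  have "{l. U_half c j l \<noteq> 0} \<subseteq> {2*(j div 2)+2, 2*(j div 2)-1, 0}"
    unfolding U_half_def Let_def by (auto split: if_splits)
  then show ?thesis by (rule finite_subset) simp
qed

lemma Uh_colfin: "finite {l. U_half c l k \<noteq> 0}"
proof -
  have "{l. U_half c l k \<noteq> 0} \<subseteq> {..k+2}"
  proof
    fix l assume "l \<in> {l. U_half c l k \<noteq> 0}"
    then have "k = 2*(l div 2)+2 \<or> (l div 2 \<ge> 1 \<and> k = 2*(l div 2)-1) \<or> (l div 2 = 0 \<and> k = 0)"
      unfolding U_half_def Let_def by (auto split: if_splits)
    moreover have "l \<le> 2*(l div 2)+1" by simp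
    ultimately show "l \<in> {..k+2}" by auto
  qed
  then show ?thesis by (rule finite_subset) simp
qed

lemmas Uh_left = mpow_left[of "U_half c", OF Uh_rowfin] for c

lemma left2:
  assumes rf: "\<And>j. finite {l. U j l \<noteq> 0}" and "a \<noteq> b" "\<And>l. l \<noteq> a \<Longrightarrow> l \<noteq> b \<Longrightarrow> U j l = 0"
  shows "mpow U (Suc n) j k = U j a * mpow U n a k + U j b * mpow U n b k"
  unfolding mpow_left[OF rf] by (rule infsum_two) (use assms in auto)

lemma right2:
  assumes "a \<noteq> b" "\<And>l. l \<noteq> a \<Longrightarrow> l \<noteq> b \<Longrightarrow> U l k = 0"
  shows "mpow U (Suc n) j k = U a k * mpow U n j a + U b k * mpow U n j b"
  unfolding mpow.simps by (subst infsum_two[OF assms(1)]) (use assms in auto)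

lemma Uh_nz: "U_half c l k \<noteq> 0 \<Longrightarrow> \<exists>q. (l = 2*q \<or> l = 2*q+1) \<and> (k = 2*q+2 \<or> (q \<ge> 1 \<and> k = 2*q-1) \<or> (q = 0 \<and> k = 0))"
  by (rule exI[of _ "l div 2"], rule conjI, presburger) (auto simp: U_half_def Let_def split: if_splits)

lemma Uh_zero: "\<not> (\<exists>q. (l = 2*q \<or> l = 2*q+1) \<and> (k = 2*q+2 \<or> (q \<ge> 1 \<and> k = 2*q-1) \<or> (q = 0 \<and> k = 0))) \<Longrightarrow> U_half c l k = 0"
  using Uh_nz by blast

lemma row0: "mpow (U_half c) (Suc n) 0 k = c 0 $ 1 $ 1 * mpow (U_half c) n 2 k + c 0 $ 2 $ 1 * mpow (U_half c) n 0 k"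
proof -
  have "mpow (U_half c) (Suc n) 0 k = U_half c 0 2 * mpow (U_half c) n 2 k + U_half c 0 0 * mpow (U_half c) n 0 k"
    by (rule left2[OF Uh_rowfin, where a="2" and b="0"], simp, rule Uh_zero, presburger)
  then show ?thesis by (simp add: U_half_def spin_half_def Let_def)
qed

lemma row1: "mpow (U_half c) (Suc n) 1 k = c 0 $ 1 $ 2 * mpow (U_half c) n 2 k + c 0 $ 2 $ 2 * mpow (U_half c) n 0 k"
proof -
  have "mpow (U_half c) (Suc n) 1 k = U_half c 1 2 * mpow (U_half c) n 2 k + U_half c 1 0 * mpow (U_half c) n 0 k"
    by (rule left2[OF Uh_rowfin, where a="2" and b="0"], simp, rule Uh_zero, presburger)
  then show ?thesis by (simp add: U_half_def spin_half_def Let_def)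
qed

lemma rowE: "mpow (U_half c) (Suc n) (2*m+2) k = c (Suc m) $ 1 $ 1 * mpow (U_half c) n (2*m+4) k + c (Suc m) $ 2 $ 1 * mpow (U_half c) n (2*m+1) k"
proof -
  have "mpow (U_half c) (Suc n) (2*m+2) k = U_half c (2*m+2) (2*m+4) * mpow (U_half c) n (2*m+4) k + U_half c (2*m+2) (2*m+1) * mpow (U_half c) n (2*m+1) k"
    by (rule left2[OF Uh_rowfin, where a="2*m+4" and b="2*m+1"], simp, rule Uh_zero, presburger)
  then show ?thesis by (simp add: U_half_def spin_half_def Let_def)
qed

lemma rowO: "mpow (U_half c) (Suc n) (2*m+3) k = c (Suc m) $ 1 $ 2 * mpow (U_half c) n (2*m+4) k + c (Suc m) $ 2 $ 2 * mpow (U_half c) n (2*m+1) k"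
proof -
  have "mpow (U_half c) (Suc n) (2*m+3) k = U_half c (2*m+3) (2*m+4) * mpow (U_half c) n (2*m+4) k + U_half c (2*m+3) (2*m+1) * mpow (U_half c) n (2*m+1) k"
    by (rule left2[OF Uh_rowfin, where a="2*m+4" and b="2*m+1"], simp, rule Uh_zero, presburger)
  then show ?thesis by (simp add: U_half_def spin_half_def Let_def)
qed

lemma col0: "mpow (U_half c) (Suc n) j 0 = c 0 $ 2 $ 1 * mpow (U_half c) n j 0 + c 0 $ 2 $ 2 * mpow (U_half c) n j 1"
proof -
  have "mpow (U_half c) (Suc n) j 0 = U_half c 0 0 * mpow (U_half c) n j 0 + U_half c 1 0 * mpow (U_half c) n j 1"
    by (rule right2[of "0" "1"], simp, rule Uh_zero, presburger)
  then show ?thesis by (simp add: U_half_def spin_half_def Let_def)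
qed

lemma colE: "mpow (U_half c) (Suc n) j (2*i+2) = c i $ 1 $ 1 * mpow (U_half c) n j (2*i) + c i $ 1 $ 2 * mpow (U_half c) n j (2*i+1)"
proof -
  have "mpow (U_half c) (Suc n) j (2*i+2) = U_half c (2*i) (2*i+2) * mpow (U_half c) n j (2*i) + U_half c (2*i+1) (2*i+2) * mpow (U_half c) n j (2*i+1)"
    by (rule right2[of "2*i" "2*i+1"], simp, rule Uh_zero, presburger)
  then show ?thesis by (simp add: U_half_def spin_half_def Let_def)
qed

lemma colO: "mpow (U_half c) (Suc n) j (2*i+1) = c (Suc i) $ 2 $ 1 * mpow (U_half c) n j (2*i+2) + c (Suc i) $ 2 $ 2 * mpow (U_half c) n j (2*i+3)"
proof -
  have "mpow (U_half c) (Suc n) j (2*i+1) = U_half c (2*i+2) (2*i+1) * mpow (U_half c) n j (2*i+2) + U_half c (2*i+3) (2*i+1) * mpow (U_half c) n j (2*i+3)"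
    by (rule right2[of "2*i+2" "2*i+3"], simp, rule Uh_zero, presburger)
  then show ?thesis by (simp add: U_half_def spin_half_def Let_def)
qed


lemma coin22:
  assumes "unitary2 C" "C $ 1 $ 1 \<noteq> 0"
  shows "C $ 2 $ 2 \<noteq> 0"
proof
  assume z: "C $ 2 $ 2 = 0"
  have e: "(C ** (\<chi> i j. cnj (C $ j $ i))) $ i $ j = (if i = j then 1 else 0)" for i j
    using assms(1) unfolding unitary2_def by (simp add: mat_def)
  have e22: "C $ 2 $ 1 * cnj (C $ 2 $ 1) + C $ 2 $ 2 * cnj (C $ 2 $ 2) = 1"
    using e[of 2 2] by (simp add: matrix_matrix_mult_def sum_2)
  have e12: "C $ 1 $ 1 * cnj (C $ 2 $ 1) + C $ 1 $ 2 * cnj (C $ 2 $ 2) = 0"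
    using e[of 1 2] by (simp add: matrix_matrix_mult_def sum_2)
  from e22 z have "C $ 2 $ 1 \<noteq> 0" by auto
  with e12 z assms(2) show False by simp
qed

lemma half_cols:
  assumes c22: "\<And>i. c i $ 2 $ 2 \<noteq> 0"
  shows "gen {\<lambda>n. mpow (U_half c) n 0 0} (\<lambda>n. mpow (U_half c) n 0 (2*i)) \<and>
         gen {\<lambda>n. mpow (U_half c) n 0 0} (\<lambda>n. mpow (U_half c) n 0 (2*i+1))"
proof (induction i)
  case 0
  have b: "gen {\<lambda>n. mpow (U_half c) n 0 0} (\<lambda>n. mpow (U_half c) n 0 0)" by (rule gen.base) simp
  have "gen {\<lambda>n. mpow (U_half c) n 0 0} (\<lambda>n. mpow (U_half c) n 0 1)"
    by (rule gen_solve[OF b b c22[of 0], where a = "c 0 $ 2 $ 1"]) (subst col0, simp add: algebra_simps)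
  with b show ?case by simp
next
  case (Suc i)
  let ?M = "{\<lambda>n. mpow (U_half c) n 0 0}"
  have A: "gen ?M (\<lambda>n. mpow (U_half c) n 0 (2*i+2))"
    by (rule gen_step[OF Suc.IH[THEN conjunct1] Suc.IH[THEN conjunct2], where a="c i $ 1 $ 1" and b="c i $ 1 $ 2"])
      (rule colE)
  have B: "gen ?M (\<lambda>n. mpow (U_half c) n 0 (2*i+3))"
    by (rule gen_solve[OF Suc.IH[THEN conjunct2] A c22[of "Suc i"], where a="c (Suc i) $ 2 $ 1"])
      (subst colO, simp add: algebra_simps)
  have e1: "2 * Suc i = 2*i+2" "2 * Suc i + 1 = 2*i+3" by simp_all
  show ?case unfolding e1 using A B by (simp add: eval_nat_numeral)
qed

lemma half_rows:
  assumes c11: "\<And>i. c i $ 1 $ 1 \<noteq> 0"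
  shows "gen {\<lambda>n. mpow (U_half c) n 0 k} (\<lambda>n. mpow (U_half c) n (2*m+1) k) \<and>
         gen {\<lambda>n. mpow (U_half c) n 0 k} (\<lambda>n. mpow (U_half c) n (2*m+2) k)"
proof (induction m)
  case 0
  let ?M = "{\<lambda>n. mpow (U_half c) n 0 k}"
  have b: "gen ?M (\<lambda>n. mpow (U_half c) n 0 k)" by (rule gen.base) simp
  have R2: "gen ?M (\<lambda>n. mpow (U_half c) n 2 k)"
    by (rule gen_solve[OF b b c11[of 0], where a = "c 0 $ 2 $ 1"]) (rule row0)
  have R1: "gen ?M (\<lambda>n. mpow (U_half c) n 1 k)"
    by (rule gen_step[OF R2 b, where a="c 0 $ 1 $ 2" and b="c 0 $ 2 $ 2"]) (rule row1)
  show ?case using R1 R2 by (simp add: eval_nat_numeral)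
next
  case (Suc m)
  let ?M = "{\<lambda>n. mpow (U_half c) n 0 k}"
  have A: "gen ?M (\<lambda>n. mpow (U_half c) n (2*m+4) k)"
    by (rule gen_solve[OF Suc.IH[THEN conjunct2] Suc.IH[THEN conjunct1] c11[of "Suc m"], where a="c (Suc m) $ 2 $ 1"])
      (rule rowE)
  have B: "gen ?M (\<lambda>n. mpow (U_half c) n (2*m+3) k)"
    by (rule gen_step[OF A Suc.IH[THEN conjunct1], where a="c (Suc m) $ 1 $ 2" and b="c (Suc m) $ 2 $ 2"])
      (rule rowO)
  have e1: "2 * Suc m + 1 = 2*m+3" "2 * Suc m + 2 = 2*m+4" by simp_all
  show ?case unfolding e1 using A B by (simp add: eval_nat_numeral)
qed

lemma half_all:
  assumes c11: "\<And>i. c i $ 1 $ 1 \<noteq> 0" and c22: "\<And>i. c i $ 2 $ 2 \<noteq> 0"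
  shows "gen {\<lambda>n. mpow (U_half c) n 0 0} (\<lambda>n. mpow (U_half c) n j k)"
proof -
  let ?M = "{\<lambda>n. mpow (U_half c) n 0 0}"
  have C: "gen ?M (\<lambda>n. mpow (U_half c) n 0 k)"
  proof -
    have "(\<exists>i. k = 2*i) \<or> (\<exists>i. k = 2*i+1)" by presburger
    then show ?thesis using half_cols[OF c22] by auto
  qed
  have R: "gen {\<lambda>n. mpow (U_half c) n 0 k} (\<lambda>n. mpow (U_half c) n j k)"
  proof -
    have "j = 0 \<or> (\<exists>m. j = 2*m+1) \<or> (\<exists>m. j = 2*m+2)" by presburger
    then show ?thesis using half_rows[OF c11, where k=k] by (auto intro: gen.base)
  qed
  show ?thesis by (rule gen_trans[OF R]) (use C in simp)
qed

lemma mom_half_eq: "mom_half c = (\<lambda>n. mpow (U_half c) n 0 0)"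
  by (simp add: mom_half_def fun_eq_iff)

lemma half_main:
  assumes "\<forall>i. unitary2 (c i) \<and> nontrivial_coin (c i)"
  shows "(weak_conv (\<lambda>n. mpow (U_half c) n) (\<lambda>_ _. 0) \<longleftrightarrow> mom_half c \<longlonglongrightarrow> 0) \<and>
       (\<forall>\<theta> :: nat \<Rightarrow> real.
          (\<exists>L. L \<noteq> (\<lambda>_ _. 0) \<and>
              weak_conv (\<lambda>n j k. exp (- \<i> * of_real (\<theta> n)) * mpow (U_half c) n j k) L)
          \<longleftrightarrow>
          ((\<exists>l. l \<noteq> 0 \<and> (\<lambda>n. exp (- \<i> * of_real (\<theta> n)) * mom_half c n) \<longlonglongrightarrow> l) \<and>
           convergent (\<lambda>n. exp (\<i> * of_real (\<theta> (Suc n) - \<theta> n)))))"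
proof -
  have c11: "c i $ 1 $ 1 \<noteq> 0" for i using assms by (simp add: nontrivial_coin_def)
  have c22: "c i $ 2 $ 2 \<noteq> 0" for i using assms coin22 c11 by blast
  let ?M = "{\<lambda>n. mpow (U_half c) n 0 0}"
  have G: "gen ?M (\<lambda>n. mpow (U_half c) n j k)" for j k by (rule half_all[OF c11 c22])
  have ME: "\<exists>j k. g = (\<lambda>n. mpow (U_half c) n j k)" if "g \<in> ?M" for g using that by blast
  have P1: "weak_conv (\<lambda>n. mpow (U_half c) n) (\<lambda>_ _. 0) \<longleftrightarrow> mom_half c \<longlonglongrightarrow> 0"
    using abs_part1[of ?M "U_half c", OF G ME] by (simp add: mom_half_eq)
  have P2: "(\<exists>L. L \<noteq> (\<lambda>_ _. 0) \<and>
              weak_conv (\<lambda>n j k. exp (- \<i> * of_real (\<theta> n)) * mpow (U_half c) n j k) L)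
          \<longleftrightarrow>
          ((\<exists>l. l \<noteq> 0 \<and> (\<lambda>n. exp (- \<i> * of_real (\<theta> n)) * mom_half c n) \<longlonglongrightarrow> l) \<and>
           convergent (\<lambda>n. exp (\<i> * of_real (\<theta> (Suc n) - \<theta> n))))" for \<theta> :: "nat \<Rightarrow> real"
    using abs_part2[of ?M "U_half c" "\<lambda>n. exp (- \<i> * of_real (\<theta> n))", OF G ME Uh_colfin norm_exp_i]
    unfolding ratio_exp mom_half_eq convergent_def by auto
  show ?thesis using P1 P2 by blast
qed


lemma UZ_nz: "U_Z c x y \<noteq> 0 \<Longrightarrow> y = (fst x + 1, True) \<or> y = (fst x - 1, False)"
  by (cases y) (auto simp: U_Z_def Let_def split: if_splits)

lemma UZ_rowfin: "finite {y. U_Z c x y \<noteq> 0}"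
proof -
  have "{y. U_Z c x y \<noteq> 0} \<subseteq> {(fst x + 1, True), (fst x - 1, False)}" using UZ_nz by blast
  then show ?thesis by (rule finite_subset) simp
qed

lemma UZ_colfin: "finite {x. U_Z c x y \<noteq> 0}"
proof -
  have "{x. U_Z c x y \<noteq> 0} \<subseteq> {(fst y - 1, True), (fst y - 1, False), (fst y + 1, True), (fst y + 1, False)}"
  proof
    fix x assume "x \<in> {x. U_Z c x y \<noteq> 0}"
    then have "y = (fst x + 1, True) \<or> y = (fst x - 1, False)" using UZ_nz by blast
    then show "x \<in> {(fst y - 1, True), (fst y - 1, False), (fst y + 1, True), (fst y + 1, False)}"
      by (cases x; cases "snd x") auto
  qed
  then show ?thesis by (rule finite_subset) simp
qed

lemma UZ_val: "U_Z c (i, b) (i', b') =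
   (if i' = i + 1 \<and> b' then c i $ 1 $ spin_idx b else if i' = i - 1 \<and> \<not> b' then c i $ 2 $ spin_idx b else 0)"
  by (simp add: U_Z_def Let_def)

lemma rowU: "mpow (U_Z c) (Suc n) (i, True) k = c i $ 1 $ 1 * mpow (U_Z c) n (i+1, True) k + c i $ 2 $ 1 * mpow (U_Z c) n (i-1, False) k"
proof -
  have "mpow (U_Z c) (Suc n) (i, True) k = U_Z c (i, True) (i+1, True) * mpow (U_Z c) n (i+1, True) k + U_Z c (i, True) (i-1, False) * mpow (U_Z c) n (i-1, False) k"
    by (rule left2[OF UZ_rowfin]) (auto dest: UZ_nz)
  then show ?thesis by (simp add: UZ_val spin_idx_def)
qed

lemma rowD: "mpow (U_Z c) (Suc n) (i, False) k = c i $ 1 $ 2 * mpow (U_Z c) n (i+1, True) k + c i $ 2 $ 2 * mpow (U_Z c) n (i-1, False) k"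
proof -
  have "mpow (U_Z c) (Suc n) (i, False) k = U_Z c (i, False) (i+1, True) * mpow (U_Z c) n (i+1, True) k + U_Z c (i, False) (i-1, False) * mpow (U_Z c) n (i-1, False) k"
    by (rule left2[OF UZ_rowfin]) (auto dest: UZ_nz)
  then show ?thesis by (simp add: UZ_val spin_idx_def)
qed

lemma colU: "mpow (U_Z c) (Suc n) j (i, True) = c (i-1) $ 1 $ 1 * mpow (U_Z c) n j (i-1, True) + c (i-1) $ 1 $ 2 * mpow (U_Z c) n j (i-1, False)"
proof -
  have "mpow (U_Z c) (Suc n) j (i, True) = U_Z c (i-1, True) (i, True) * mpow (U_Z c) n j (i-1, True) + U_Z c (i-1, False) (i, True) * mpow (U_Z c) n j (i-1, False)"
  proof (rule right2)
    fix l :: "int \<times> bool" assume "l \<noteq> (i-1, True)" "l \<noteq> (i-1, False)"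
    then show "U_Z c l (i, True) = 0" using UZ_nz[of c l "(i, True)"] by (cases l; cases "snd l") auto
  qed simp
  then show ?thesis by (simp add: UZ_val spin_idx_def)
qed

lemma colD: "mpow (U_Z c) (Suc n) j (i, False) = c (i+1) $ 2 $ 1 * mpow (U_Z c) n j (i+1, True) + c (i+1) $ 2 $ 2 * mpow (U_Z c) n j (i+1, False)"
proof -
  have "mpow (U_Z c) (Suc n) j (i, False) = U_Z c (i+1, True) (i, False) * mpow (U_Z c) n j (i+1, True) + U_Z c (i+1, False) (i, False) * mpow (U_Z c) n j (i+1, False)"
  proof (rule right2)
    fix l :: "int \<times> bool" assume "l \<noteq> (i+1, True)" "l \<noteq> (i+1, False)"
    then show "U_Z c l (i, False) = 0" using UZ_nz[of c l "(i, False)"] by (cases l; cases "snd l") auto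
  qed simp
  then show ?thesis by (simp add: UZ_val spin_idx_def)
qed


abbreviation "RZ c k x \<equiv> (\<lambda>n. mpow (U_Z c) n x k)"
abbreviation "CZ c j y \<equiv> (\<lambda>n. mpow (U_Z c) n j y)"

lemma z_rows:
  assumes c11: "\<And>i. c i $ 1 $ 1 \<noteq> 0" and c22: "\<And>i. c i $ 2 $ 2 \<noteq> 0"
  shows "gen {RZ c k (0, True), RZ c k (-1, False)} (RZ c k (i, True)) \<and>
         gen {RZ c k (0, True), RZ c k (-1, False)} (RZ c k (i - 1, False))"
proof (induction i rule: int_induct[where k = 0])
  case base
  then show ?case by (auto intro: gen.base)
next
  case (step1 i)
  let ?M = "{RZ c k (0, True), RZ c k (-1, False)}"
  have A: "gen ?M (RZ c k (i+1, True))"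
    by (rule gen_solve[OF step1(2)[THEN conjunct1] step1(2)[THEN conjunct2] c11[of i], where a="c i $ 2 $ 1"])
      (rule rowU)
  have B: "gen ?M (RZ c k (i, False))"
    by (rule gen_step[OF A step1(2)[THEN conjunct2], where a="c i $ 1 $ 2" and b="c i $ 2 $ 2"])
      (rule rowD)
  show ?case using A B by simp
next
  case (step2 i)
  let ?M = "{RZ c k (0, True), RZ c k (-1, False)}"
  have A: "gen ?M (RZ c k (i-2, False))"
  proof (rule gen_solve[OF step2(2)[THEN conjunct2] step2(2)[THEN conjunct1] c22[of "i-1"], where a="c (i-1) $ 1 $ 2"])
    fix n show "mpow (U_Z c) (Suc n) (i - 1, False) k = c (i - 1) $ 2 $ 2 * mpow (U_Z c) n (i - 2, False) k + c (i - 1) $ 1 $ 2 * mpow (U_Z c) n (i, True) k"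
      using rowD[of c n "i-1" k] by (simp add: algebra_simps)
  qed
  have B: "gen ?M (RZ c k (i-1, True))"
  proof (rule gen_step[OF step2(2)[THEN conjunct1] A, where a="c (i-1) $ 1 $ 1" and b="c (i-1) $ 2 $ 1"])
    fix n show "mpow (U_Z c) (Suc n) (i - 1, True) k = c (i - 1) $ 1 $ 1 * mpow (U_Z c) n (i, True) k + c (i - 1) $ 2 $ 1 * mpow (U_Z c) n (i - 2, False) k"
      using rowU[of c n "i-1" k] by (simp add: algebra_simps)
  qed
  have e: "i - 1 - 1 = i - 2" by simp
  show ?case unfolding e using A B by simp
qed

lemma z_cols:
  assumes c11: "\<And>i. c i $ 1 $ 1 \<noteq> 0" and c22: "\<And>i. c i $ 2 $ 2 \<noteq> 0"
  shows "gen {CZ c j (0, True), CZ c j (-1, False)} (CZ c j (i, True)) \<and>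
         gen {CZ c j (0, True), CZ c j (-1, False)} (CZ c j (i - 1, False))"
proof (induction i rule: int_induct[where k = 0])
  case base
  then show ?case by (auto intro: gen.base)
next
  case (step1 i)
  let ?M = "{CZ c j (0, True), CZ c j (-1, False)}"
  have A: "gen ?M (CZ c j (i, False))"
  proof (rule gen_solve[OF step1(2)[THEN conjunct2] step1(2)[THEN conjunct1] c22[of i], where a="c i $ 2 $ 1"])
    fix n show "mpow (U_Z c) (Suc n) j (i - 1, False) = c i $ 2 $ 2 * mpow (U_Z c) n j (i, False) + c i $ 2 $ 1 * mpow (U_Z c) n j (i, True)"
      using colD[of c n j "i-1"] by (simp add: algebra_simps)
  qed
  have B: "gen ?M (CZ c j (i+1, True))"
  proof (rule gen_step[OF step1(2)[THEN conjunct1] A, where a="c i $ 1 $ 1" and b="c i $ 1 $ 2"])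
    fix n show "mpow (U_Z c) (Suc n) j (i + 1, True) = c i $ 1 $ 1 * mpow (U_Z c) n j (i, True) + c i $ 1 $ 2 * mpow (U_Z c) n j (i, False)"
      using colU[of c n j "i+1"] by simp
  qed
  show ?case using A B by simp
next
  case (step2 i)
  let ?M = "{CZ c j (0, True), CZ c j (-1, False)}"
  have A: "gen ?M (CZ c j (i-1, True))"
  proof (rule gen_solve[OF step2(2)[THEN conjunct1] step2(2)[THEN conjunct2] c11[of "i-1"], where a="c (i-1) $ 1 $ 2"])
    fix n show "mpow (U_Z c) (Suc n) j (i, True) = c (i - 1) $ 1 $ 1 * mpow (U_Z c) n j (i - 1, True) + c (i - 1) $ 1 $ 2 * mpow (U_Z c) n j (i - 1, False)"
      by (rule colU)
  qed
  have B: "gen ?M (CZ c j (i-2, False))"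
  proof (rule gen_step[OF A step2(2)[THEN conjunct2], where a="c (i-1) $ 2 $ 1" and b="c (i-1) $ 2 $ 2"])
    fix n show "mpow (U_Z c) (Suc n) j (i - 2, False) = c (i - 1) $ 2 $ 1 * mpow (U_Z c) n j (i - 1, True) + c (i - 1) $ 2 $ 2 * mpow (U_Z c) n j (i - 1, False)"
      using colD[of c n j "i-2"] by (simp add: algebra_simps)
  qed
  have e: "i - 1 - 1 = i - 2" by simp
  show ?case unfolding e using A B by simp
qed

definition M0 :: "(int \<Rightarrow> complex^2^2) \<Rightarrow> (nat \<Rightarrow> complex) set" where
  "M0 c = {CZ c (0,True) (0,True), CZ c (0,True) (-1,False), CZ c (-1,False) (0,True), CZ c (-1,False) (-1,False)}"

lemma z_all:
  assumes c11: "\<And>i. c i $ 1 $ 1 \<noteq> 0" and c22: "\<And>i. c i $ 2 $ 2 \<noteq> 0"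
  shows "gen (M0 c) (\<lambda>n. mpow (U_Z c) n x y)"
proof -
  obtain i b where x: "x = (i, b)" by (cases x)
  have R: "gen {RZ c y (0, True), RZ c y (-1, False)} (RZ c y x)"
  proof (cases b)
    case True then show ?thesis using z_rows[OF c11 c22, where k=y and i=i] x by simp
  next
    case False then show ?thesis using z_rows[OF c11 c22, where k=y and i="i+1"] x by simp
  qed
  have C: "gen (M0 c) (CZ c j y)" if "j = (0, True) \<or> j = (-1, False)" for j
  proof -
    obtain i' b' where y: "y = (i', b')" by (cases y)
    have "gen {CZ c j (0, True), CZ c j (-1, False)} (CZ c j y)"
    proof (cases b')
      case True then show ?thesis using z_cols[OF c11 c22, where j=j and i=i'] y by simp
    next
      case False then show ?thesis using z_cols[OF c11 c22, where j=j and i="i'+1"] y by simp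
    qed
    then show ?thesis by (rule gen_trans) (use that in \<open>auto simp: M0_def intro: gen.base\<close>)
  qed
  show ?thesis by (rule gen_trans[OF R]) (use C in auto)
qed


definition unf :: "int \<times> bool \<Rightarrow> nat" where
  "unf x = (if fst x \<ge> 0 then (if snd x then 4 * nat (fst x) else 4 * nat (fst x) + 3)
            else (if snd x then 4 * nat (- fst x - 1) + 2 else 4 * nat (- fst x - 1) + 1))"

lemma fold_4:
  "fold_state (4*m) = (int m, True)" "fold_state (4*m+1) = (-(int m+1), False)"
  "fold_state (4*m+2) = (-(int m+1), True)" "fold_state (4*m+3) = (int m, False)"
proof -
  have a: "(4*m) div 4 = m" "(4*m) mod 4 = 0" "(4*m+1) div 4 = m" "(4*m+1) mod 4 = 1"
    "(4*m+2) div 4 = m" "(4*m+2) mod 4 = 2" "(4*m+3) div 4 = m" "(4*m+3) mod 4 = 3" by presburger+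
  show "fold_state (4*m) = (int m, True)" unfolding fold_state_def Let_def by (simp only: a) simp
  show "fold_state (4*m+1) = (-(int m+1), False)" unfolding fold_state_def Let_def by (simp only: a) simp
  show "fold_state (4*m+2) = (-(int m+1), True)" unfolding fold_state_def Let_def by (simp only: a) simp
  show "fold_state (4*m+3) = (int m, False)" unfolding fold_state_def Let_def by (simp only: a) simp
qed

lemma fold_unf: "fold_state (unf x) = x"
proof -
  obtain i b where x: "x = (i, b)" by (cases x)
  show ?thesis
  proof (cases "i \<ge> 0")
    case True
    then have ii: "int (nat i) = i" by simp
    show ?thesis
    proof (cases b)
      case True
      then have "unf x = 4 * nat i" using \<open>i \<ge> 0\<close> x by (simp add: unf_def)
      then show ?thesis using x True by (simp only: fold_4 ii)
    next
      case False
      then have "unf x = 4 * nat i + 3" using \<open>i \<ge> 0\<close> x by (simp add: unf_def)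
      then show ?thesis using x False by (simp only: fold_4 ii)
    qed
  next
    case False
    then have ii: "-(int (nat (-i-1)) + 1) = i" by simp
    show ?thesis
    proof (cases b)
      case True
      then have "unf x = 4 * nat (-i-1) + 2" using \<open>\<not> i \<ge> 0\<close> x by (simp add: unf_def)
      then show ?thesis using x True by (simp only: fold_4 ii)
    next
      case False
      then have "unf x = 4 * nat (-i-1) + 1" using \<open>\<not> i \<ge> 0\<close> x by (simp add: unf_def)
      then show ?thesis using x False by (simp only: fold_4 ii)
    qed
  qed
qed

lemma unf_fold: "unf (fold_state p) = p"
proof -
  define q where "q = p div 4"
  have "p = 4*q \<or> p = 4*q+1 \<or> p = 4*q+2 \<or> p = 4*q+3" unfolding q_def by presburger
  then show ?thesis
  proof (elim disjE)
    assume p: "p = 4*q" show ?thesis unfolding p fold_4 by (simp add: unf_def)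
  next
    assume p: "p = 4*q+1" show ?thesis unfolding p fold_4 by (simp add: unf_def)
  next
    assume p: "p = 4*q+2" show ?thesis unfolding p fold_4 by (simp add: unf_def)
  next
    assume p: "p = 4*q+3" show ?thesis unfolding p fold_4 by (simp add: unf_def)
  qed
qed

lemma mpow_fold: "mpow (U_fold c) n p q = mpow (U_Z c) n (fold_state p) (fold_state q)"
proof (induction n arbitrary: q)
  case 0
  have "p = q \<longleftrightarrow> fold_state p = fold_state q" by (metis unf_fold)
  then show ?case by simp
next
  case (Suc n)
  show ?case unfolding mpow.simps
    by (rule infsum_reindex_bij_witness[where i = unf and j = fold_state])
       (auto simp: fold_unf unf_fold Suc.IH U_fold_def)
qed

lemma fold01: "fold_state 0 = (0, True)" "fold_state 1 = (-1, False)"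
  by (simp_all add: fold_state_def)

lemma mom_Z_entry: "mom_Z c n $ a $ b = mpow (U_Z c) n (fold_state (idx2 a)) (fold_state (idx2 b))"
  by (simp add: mom_Z_def block_def mpow_fold)

lemma idx2_vals: "idx2 1 = 0" "idx2 2 = 1"
  by (simp_all add: idx2_def)

lemma M0_eq: "M0 c = {(\<lambda>n. mom_Z c n $ a $ b) | a b. True}"
proof -
  have st: "fold_state (idx2 a) = (if a = 1 then (0,True) else (-1,False))" for a :: 2
    by (cases "a = 1") (simp_all add: idx2_def fold_state_def)
  have e: "(\<lambda>n. mom_Z c n $ a $ b) = CZ c (if a = 1 then (0,True) else (-1,False)) (if b = 1 then (0,True) else (-1,False))" for a b
    by (simp only: mom_Z_entry st)
  have two: "(1::2) \<noteq> 2" by simp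
  show ?thesis
  proof
    show "M0 c \<subseteq> {(\<lambda>n. mom_Z c n $ a $ b) | a b. True}"
      unfolding M0_def
    proof (intro insert_subsetI empty_subsetI)
      show "CZ c (0, True) (0, True) \<in> {(\<lambda>n. mom_Z c n $ a $ b) | a b. True}" unfolding mem_Collect_eq by (rule exI[of _ 1], rule exI[of _ 1]) (simp add: e)
      show "CZ c (0, True) (-1, False) \<in> {(\<lambda>n. mom_Z c n $ a $ b) | a b. True}" unfolding mem_Collect_eq by (rule exI[of _ 1], rule exI[of _ 2]) (simp add: e)
      show "CZ c (-1, False) (0, True) \<in> {(\<lambda>n. mom_Z c n $ a $ b) | a b. True}" unfolding mem_Collect_eq by (rule exI[of _ 2], rule exI[of _ 1]) (simp add: e)
      show "CZ c (-1, False) (-1, False) \<in> {(\<lambda>n. mom_Z c n $ a $ b) | a b. True}" unfolding mem_Collect_eq by (rule exI[of _ 2], rule exI[of _ 2]) (simp add: e)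
    qed
  next
    show "{(\<lambda>n. mom_Z c n $ a $ b) | a b. True} \<subseteq> M0 c"
      unfolding M0_def e by auto
  qed
qed

lemma vec2_tendsto:
  fixes X :: "nat \<Rightarrow> 'x::topological_space^'n^'m"
  shows "X \<longlonglongrightarrow> l \<longleftrightarrow> (\<forall>a b. (\<lambda>n. X n $ a $ b) \<longlonglongrightarrow> l $ a $ b)"
proof
  assume "X \<longlonglongrightarrow> l"
  then show "\<forall>a b. (\<lambda>n. X n $ a $ b) \<longlonglongrightarrow> l $ a $ b" by (intro allI tendsto_vec_nth)
next
  assume A: "\<forall>a b. (\<lambda>n. X n $ a $ b) \<longlonglongrightarrow> l $ a $ b"
  show "X \<longlonglongrightarrow> l"
    by (intro vec_tendstoI) (use A in blast)
qed


lemma cscale_entry: "cscale z M $ a $ b = z * M $ a $ b"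
  by (simp add: cscale_def)

lemma z_main:
  assumes "\<forall>i. unitary2 (c i) \<and> nontrivial_coin (c i)"
  shows "(weak_conv (\<lambda>n. mpow (U_Z c) n) (\<lambda>_ _. 0) \<longleftrightarrow> mom_Z c \<longlonglongrightarrow> 0) \<and>
       (\<forall>\<theta> :: nat \<Rightarrow> real.
          (\<exists>L. L \<noteq> (\<lambda>_ _. 0) \<and>
              weak_conv (\<lambda>n j k. exp (- \<i> * of_real (\<theta> n)) * mpow (U_Z c) n j k) L)
          \<longleftrightarrow>
          ((\<exists>l. l \<noteq> 0 \<and> (\<lambda>n. cscale (exp (- \<i> * of_real (\<theta> n))) (mom_Z c n)) \<longlonglongrightarrow> l) \<and>
           convergent (\<lambda>n. exp (\<i> * of_real (\<theta> (Suc n) - \<theta> n)))))"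
proof -
  have c11: "c i $ 1 $ 1 \<noteq> 0" for i using assms by (simp add: nontrivial_coin_def)
  have c22: "c i $ 2 $ 2 \<noteq> 0" for i using assms coin22 c11 by blast
  have G: "gen (M0 c) (\<lambda>n. mpow (U_Z c) n j k)" for j k by (rule z_all[OF c11 c22])
  have ME: "\<exists>j k. g = (\<lambda>n. mpow (U_Z c) n j k)" if "g \<in> M0 c" for g
    using that unfolding M0_def by blast
  have P1: "weak_conv (\<lambda>n. mpow (U_Z c) n) (\<lambda>_ _. 0) \<longleftrightarrow> mom_Z c \<longlonglongrightarrow> 0"
  proof -
    have "weak_conv (\<lambda>n. mpow (U_Z c) n) (\<lambda>_ _. 0) \<longleftrightarrow> (\<forall>g\<in>M0 c. g \<longlonglongrightarrow> 0)"
      by (rule abs_part1[OF G ME])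
    also have "\<dots> \<longleftrightarrow> (\<forall>a b. (\<lambda>n. mom_Z c n $ a $ b) \<longlonglongrightarrow> 0)"
      unfolding M0_eq by blast
    also have "\<dots> \<longleftrightarrow> mom_Z c \<longlonglongrightarrow> 0"
      unfolding vec2_tendsto[of "mom_Z c" 0] by simp
    finally show ?thesis .
  qed
  have P2: "(\<exists>L. L \<noteq> (\<lambda>_ _. 0) \<and>
              weak_conv (\<lambda>n j k. exp (- \<i> * of_real (\<theta> n)) * mpow (U_Z c) n j k) L)
          \<longleftrightarrow>
          ((\<exists>l. l \<noteq> 0 \<and> (\<lambda>n. cscale (exp (- \<i> * of_real (\<theta> n))) (mom_Z c n)) \<longlonglongrightarrow> l) \<and>
           convergent (\<lambda>n. exp (\<i> * of_real (\<theta> (Suc n) - \<theta> n))))" for \<theta> :: "nat \<Rightarrow> real"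
  proof -
    define \<omega> where "\<omega> n = exp (- \<i> * of_real (\<theta> n))" for n
    define E where "E a b = (\<lambda>n. \<omega> n * mom_Z c n $ a $ b)" for a b
    have nw: "norm (\<omega> n) = 1" for n unfolding \<omega>_def by (rule norm_exp_i)
    have rat: "(\<lambda>n. \<omega> n / \<omega> (Suc n)) = (\<lambda>n. exp (\<i> * of_real (\<theta> (Suc n) - \<theta> n)))"
      unfolding \<omega>_def ratio_exp by simp
    have A: "(\<exists>L. L \<noteq> (\<lambda>_ _. 0) \<and> weak_conv (\<lambda>n j k. \<omega> n * mpow (U_Z c) n j k) L) \<longleftrightarrow>
      ((\<exists>g\<in>M0 c. \<exists>l. l \<noteq> 0 \<and> (\<lambda>n. \<omega> n * g n) \<longlonglongrightarrow> l) \<and> (\<forall>g\<in>M0 c. convergent (\<lambda>n. \<omega> n * g n))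
      \<and> convergent (\<lambda>n. \<omega> n / \<omega> (Suc n)))"
      by (rule abs_part2[OF G ME UZ_colfin nw])
    have B: "((\<exists>g\<in>M0 c. \<exists>l. l \<noteq> 0 \<and> (\<lambda>n. \<omega> n * g n) \<longlonglongrightarrow> l) \<and> (\<forall>g\<in>M0 c. convergent (\<lambda>n. \<omega> n * g n)))
       \<longleftrightarrow> ((\<exists>a b. \<exists>l. l \<noteq> 0 \<and> E a b \<longlonglongrightarrow> l) \<and> (\<forall>a b. convergent (E a b)))"
      unfolding M0_eq E_def by auto
    have C: "((\<exists>a b. \<exists>l. l \<noteq> 0 \<and> E a b \<longlonglongrightarrow> l) \<and> (\<forall>a b. convergent (E a b)))
       \<longleftrightarrow> (\<exists>l. l \<noteq> 0 \<and> (\<lambda>n. cscale (\<omega> n) (mom_Z c n)) \<longlonglongrightarrow> l)"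
    proof
      assume H: "(\<exists>a b. \<exists>l. l \<noteq> 0 \<and> E a b \<longlonglongrightarrow> l) \<and> (\<forall>a b. convergent (E a b))"
      then obtain a0 b0 l0 where "l0 \<noteq> 0" "E a0 b0 \<longlonglongrightarrow> l0" by blast
      define l where "l = (\<chi> a b. lim (E a b))"
      have lim: "E a b \<longlonglongrightarrow> l $ a $ b" for a b
        unfolding l_def using H by (simp add: convergent_LIMSEQ_iff)
      have "l $ a0 $ b0 = l0" using LIMSEQ_unique[OF lim \<open>E a0 b0 \<longlonglongrightarrow> l0\<close>] .
      then have "l \<noteq> 0" using \<open>l0 \<noteq> 0\<close> by auto
      moreover have "(\<lambda>n. cscale (\<omega> n) (mom_Z c n)) \<longlonglongrightarrow> l"
        unfolding vec2_tendsto cscale_entry using lim unfolding E_def by simp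
      ultimately show "\<exists>l. l \<noteq> 0 \<and> (\<lambda>n. cscale (\<omega> n) (mom_Z c n)) \<longlonglongrightarrow> l" by blast
    next
      assume "\<exists>l. l \<noteq> 0 \<and> (\<lambda>n. cscale (\<omega> n) (mom_Z c n)) \<longlonglongrightarrow> l"
      then obtain l where l0: "l \<noteq> 0" and lim: "(\<lambda>n. cscale (\<omega> n) (mom_Z c n)) \<longlonglongrightarrow> l" by blast
      have lim': "E a b \<longlonglongrightarrow> l $ a $ b" for a b
        using lim unfolding vec2_tendsto cscale_entry E_def by simp
      from l0 obtain a b where "l $ a $ b \<noteq> 0" by (metis vec_eq_iff zero_index)
      then show "(\<exists>a b. \<exists>l. l \<noteq> 0 \<and> E a b \<longlonglongrightarrow> l) \<and> (\<forall>a b. convergent (E a b))"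
        using lim' unfolding convergent_def by blast
    qed
    have D: "(\<exists>L. L \<noteq> (\<lambda>_ _. 0) \<and> weak_conv (\<lambda>n j k. \<omega> n * mpow (U_Z c) n j k) L) \<longleftrightarrow>
      ((\<exists>l. l \<noteq> 0 \<and> (\<lambda>n. cscale (\<omega> n) (mom_Z c n)) \<longlonglongrightarrow> l) \<and> convergent (\<lambda>n. \<omega> n / \<omega> (Suc n)))"
      using A B C by blast
    show ?thesis using D unfolding rat unfolding \<omega>_def .
  qed
  show ?thesis using P1 P2 by blast
qed


theorem proposition1:
  shows
  "(\<forall>c :: nat \<Rightarrow> complex^2^2. (\<forall>i. unitary2 (c i) \<and> nontrivial_coin (c i)) \<longrightarrow>
      ((weak_conv (\<lambda>n. mpow (U_half c) n) (\<lambda>_ _. 0) \<longleftrightarrow> mom_half c \<longlonglongrightarrow> 0) \<and>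
       (\<forall>\<theta> :: nat \<Rightarrow> real.
          (\<exists>L. L \<noteq> (\<lambda>_ _. 0) \<and>
              weak_conv (\<lambda>n j k. exp (- \<i> * of_real (\<theta> n)) * mpow (U_half c) n j k) L)
          \<longleftrightarrow>
          ((\<exists>l. l \<noteq> 0 \<and> (\<lambda>n. exp (- \<i> * of_real (\<theta> n)) * mom_half c n) \<longlonglongrightarrow> l) \<and>
           convergent (\<lambda>n. exp (\<i> * of_real (\<theta> (Suc n) - \<theta> n)))))))
   \<and>
   (\<forall>c :: int \<Rightarrow> complex^2^2. (\<forall>i. unitary2 (c i) \<and> nontrivial_coin (c i)) \<longrightarrow>
      ((weak_conv (\<lambda>n. mpow (U_Z c) n) (\<lambda>_ _. 0) \<longleftrightarrow> mom_Z c \<longlonglongrightarrow> 0) \<and>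
       (\<forall>\<theta> :: nat \<Rightarrow> real.
          (\<exists>L. L \<noteq> (\<lambda>_ _. 0) \<and>
              weak_conv (\<lambda>n j k. exp (- \<i> * of_real (\<theta> n)) * mpow (U_Z c) n j k) L)
          \<longleftrightarrow>
          ((\<exists>l. l \<noteq> 0 \<and> (\<lambda>n. cscale (exp (- \<i> * of_real (\<theta> n))) (mom_Z c n)) \<longlonglongrightarrow> l) \<and>
           convergent (\<lambda>n. exp (\<i> * of_real (\<theta> (Suc n) - \<theta> n)))))))"
  using half_main z_main by blast

end
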